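(* Let $e,m_->0$. There exist constants $0<C_1\le C_1'$ and $0<C_2\le C_2'$, depending only on $e,m_-$ (in particular independent of $k,\xi$), such that for every $k\in\mathbb{Z}\setminus\{0\}$, $\xi\in\mathbb{R}$ and every solution $B(t)=(B_1(t),B_2(t))^\top\in\mathbb{C}^2$ of $\frac{d}{dt}B=L_-(t)B$ on $[0,\infty)$, the functional $$\mathcal{E}_-(t)=\sqrt{\tfrac{p_2}{m_2}}|B_1|^2+2\frac{h_2}{\sqrt{m_2p_2}}\Re(B_1\bar B_2)+\sqrt{\tfrac{m_2}{p_2}}|B_2|^2$$ satisfies, for all $t\ge0$, $$C_1\mathcal{E}_-(0)\le\mathcal{E}_-(t)\le C_1'\mathcal{E}_-(0),\qquad C_2|B(0)|\le|B(t)|\le C_2'|B(0)|.$$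
   Context: For fixed $k\in\mathbb{Z}\setminus\{0\}$, $\xi\in\mathbb{R}$ let $\alpha(t)=k^2+(\xi-kt)^2$, so $\partial_t\alpha=-2k(\xi-kt)$. Define $h_2(t)=\frac14\alpha^{-1}\partial_t\alpha$, $m_2(t)=\frac{1}{\sqrt{m_-}}\alpha^{1/2}$, $p_2(t)=\frac{4\pi e^2}{\sqrt{m_-}\alpha^{1/2}}+\frac{2k^2\sqrt{m_-}}{\alpha^{3/2}}+\frac{1}{\sqrt{m_-}}\alpha^{1/2}$, and $$L_-(t)=\begin{pmatrix}-h_2(t) & -m_2(t)\\ p_2(t) & h_2(t)\end{pmatrix}.$$ (This is the Fourier-side symmetrized form, in the sheared coordinates $X=x-yt$, $Y=y$, of the linearized electron Euler–Poisson system around the Couette flow.) *)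

theory Defs
  imports "HOL-Analysis.Analysis"
begin

definition alpha :: "int \<Rightarrow> real \<Rightarrow> real \<Rightarrow> real" where
  "alpha k \<xi> t = (real_of_int k)\<^sup>2 + (\<xi> - real_of_int k * t)\<^sup>2"

definition dalpha :: "int \<Rightarrow> real \<Rightarrow> real \<Rightarrow> real" where
  "dalpha k \<xi> t = - 2 * real_of_int k * (\<xi> - real_of_int k * t)"

definition h2 :: "int \<Rightarrow> real \<Rightarrow> real \<Rightarrow> real" where
  "h2 k \<xi> t = (1/4) * dalpha k \<xi> t / alpha k \<xi> t"

definition m2 :: "real \<Rightarrow> int \<Rightarrow> real \<Rightarrow> real \<Rightarrow> real" where
  "m2 mm k \<xi> t = sqrt (alpha k \<xi> t) / sqrt mm"

definition p2 :: "real \<Rightarrow> real \<Rightarrow> int \<Rightarrow> real \<Rightarrow> real \<Rightarrow> real" where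
  "p2 e mm k \<xi> t =
     4 * pi * e\<^sup>2 / (sqrt mm * sqrt (alpha k \<xi> t))
     + 2 * (real_of_int k)\<^sup>2 * sqrt mm / (alpha k \<xi> t powr (3/2))
     + sqrt (alpha k \<xi> t) / sqrt mm"

text \<open>(B1,B2) solves dB/dt = L_-(t) B on [0,infinity).\<close>
definition is_sol :: "real \<Rightarrow> real \<Rightarrow> int \<Rightarrow> real \<Rightarrow> (real \<Rightarrow> complex) \<Rightarrow> (real \<Rightarrow> complex) \<Rightarrow> bool" where
  "is_sol e mm k \<xi> B1 B2 \<longleftrightarrow>
     (\<forall>t\<ge>0.
        (B1 has_vector_derivative
            (- complex_of_real (h2 k \<xi> t) * B1 t - complex_of_real (m2 mm k \<xi> t) * B2 t))
          (at t within {0..}) \<and>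
        (B2 has_vector_derivative
            (complex_of_real (p2 e mm k \<xi> t) * B1 t + complex_of_real (h2 k \<xi> t) * B2 t))
          (at t within {0..}))"

definition energy :: "real \<Rightarrow> real \<Rightarrow> int \<Rightarrow> real \<Rightarrow> (real \<Rightarrow> complex) \<Rightarrow> (real \<Rightarrow> complex) \<Rightarrow> real \<Rightarrow> real" where
  "energy e mm k \<xi> B1 B2 t =
     sqrt (p2 e mm k \<xi> t / m2 mm k \<xi> t) * (cmod (B1 t))\<^sup>2
     + 2 * h2 k \<xi> t / sqrt (m2 mm k \<xi> t * p2 e mm k \<xi> t) * Re (B1 t * cnj (B2 t))
     + sqrt (m2 mm k \<xi> t / p2 e mm k \<xi> t) * (cmod (B2 t))\<^sup>2"

definition Bnorm :: "(real \<Rightarrow> complex) \<Rightarrow> (real \<Rightarrow> complex) \<Rightarrow> real \<Rightarrow> real" where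
  "Bnorm B1 B2 t = sqrt ((cmod (B1 t))\<^sup>2 + (cmod (B2 t))\<^sup>2)"

end

theory Submission imports Defs begin

definition Rf :: "real \<Rightarrow> real \<Rightarrow> int \<Rightarrow> real \<Rightarrow> real \<Rightarrow> real" where
  "Rf e mm k \<xi> t = 1 + 4*pi*e\<^sup>2 / alpha k \<xi> t + 2 * (real_of_int k)\<^sup>2 * mm / (alpha k \<xi> t)\<^sup>2"
definition Qf :: "real \<Rightarrow> real \<Rightarrow> int \<Rightarrow> real \<Rightarrow> real \<Rightarrow> real" where
  "Qf e mm k \<xi> t = 4*pi*e\<^sup>2/mm + 2 * (real_of_int k)\<^sup>2 / alpha k \<xi> t + alpha k \<xi> t / mm"

lemma alpha_facts:
  assumes "k \<noteq> 0"
  shows "alpha k \<xi> t \<ge> (real_of_int k)\<^sup>2" "(real_of_int k)\<^sup>2 \<ge> 1" "alpha k \<xi> t \<ge> 1" "alpha k \<xi> t > 0"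
    "\<bar>dalpha k \<xi> t\<bar> \<le> alpha k \<xi> t" "(dalpha k \<xi> t)\<^sup>2 \<le> 4 * (real_of_int k)\<^sup>2 * alpha k \<xi> t"
proof -
  have a1: "1 \<le> \<bar>k\<bar>" using assms by linarith
  have "1 \<le> \<bar>k\<bar> * \<bar>k\<bar>" using mult_mono[OF a1 a1] by simp
  then have "1 \<le> real_of_int (\<bar>k\<bar> * \<bar>k\<bar>)" by linarith
  then have k1: "(real_of_int k)\<^sup>2 \<ge> 1" by (simp add: power2_eq_square)
  define s where "s = \<xi> - real_of_int k * t"
  have al: "alpha k \<xi> t = (real_of_int k)\<^sup>2 + s\<^sup>2" unfolding alpha_def s_def ..
  have da: "dalpha k \<xi> t = - 2 * real_of_int k * s" unfolding dalpha_def s_def ..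
  have s0: "s\<^sup>2 \<ge> 0" by simp
  show g1: "alpha k \<xi> t \<ge> (real_of_int k)\<^sup>2" "(real_of_int k)\<^sup>2 \<ge> 1" unfolding al using k1 s0 by linarith+
  then show "alpha k \<xi> t \<ge> 1" "alpha k \<xi> t > 0" by linarith+
  have "0 \<le> (\<bar>real_of_int k\<bar> - \<bar>s\<bar>)\<^sup>2" by simp
  also have "\<dots> = (real_of_int k)\<^sup>2 + s\<^sup>2 - 2 * \<bar>real_of_int k\<bar> * \<bar>s\<bar>" by (simp add: power2_eq_square algebra_simps)
  finally have "2 * \<bar>real_of_int k\<bar> * \<bar>s\<bar> \<le> (real_of_int k)\<^sup>2 + s\<^sup>2" by linarith
  moreover have "\<bar>dalpha k \<xi> t\<bar> = 2 * \<bar>real_of_int k\<bar> * \<bar>s\<bar>" unfolding da by (simp add: abs_mult)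
  ultimately show "\<bar>dalpha k \<xi> t\<bar> \<le> alpha k \<xi> t" unfolding al by linarith
  have "(dalpha k \<xi> t)\<^sup>2 = 4 * (real_of_int k)\<^sup>2 * s\<^sup>2" unfolding da by (simp add: power2_eq_square)
  also have "\<dots> \<le> 4 * (real_of_int k)\<^sup>2 * ((real_of_int k)\<^sup>2 + s\<^sup>2)" by (intro mult_left_mono) auto
  finally show "(dalpha k \<xi> t)\<^sup>2 \<le> 4 * (real_of_int k)\<^sup>2 * alpha k \<xi> t" unfolding al .
qed

lemma p2_eq: assumes "k \<noteq> 0" "mm > 0"
  shows "p2 e mm k \<xi> t = m2 mm k \<xi> t * Rf e mm k \<xi> t"
proof -
  have a: "alpha k \<xi> t > 0" using alpha_facts[OF assms(1)] by auto
  have "alpha k \<xi> t powr (3/2) = alpha k \<xi> t * sqrt (alpha k \<xi> t)"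
  proof -
    have "alpha k \<xi> t powr (3/2) = alpha k \<xi> t powr (1 + 1/2)" by simp
    also have "\<dots> = alpha k \<xi> t * sqrt (alpha k \<xi> t)" using powr_add[of "alpha k \<xi> t" 1 "1/2"] a by (simp add: powr_half_sqrt)
    finally show ?thesis .
  qed
  moreover obtain sa where sa: "sa > 0" "alpha k \<xi> t = sa * sa" "sqrt (alpha k \<xi> t) = sa"
    using a by (intro that[of "sqrt (alpha k \<xi> t)"]) auto
  moreover obtain sm where sm: "sm > 0" "mm = sm * sm" "sqrt mm = sm"
    using assms by (intro that[of "sqrt mm"]) auto
  ultimately show ?thesis unfolding p2_def m2_def Rf_def
    by (simp add: field_simps power2_eq_square)
qed

lemma mp_eq: assumes "k \<noteq> 0" "mm > 0"
  shows "m2 mm k \<xi> t * p2 e mm k \<xi> t = Qf e mm k \<xi> t"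
proof -
  have a: "alpha k \<xi> t > 0" using alpha_facts[OF assms(1)] by auto
  obtain sa where sa: "sa > 0" "alpha k \<xi> t = sa * sa" "sqrt (alpha k \<xi> t) = sa"
    using a by (intro that[of "sqrt (alpha k \<xi> t)"]) auto
  obtain sm where sm: "sm > 0" "mm = sm * sm" "sqrt mm = sm"
    using assms by (intro that[of "sqrt mm"]) auto
  show ?thesis unfolding p2_eq[OF assms] unfolding m2_def Rf_def Qf_def sa sm
    using sa sm by (simp add: field_simps power2_eq_square)
qed

lemma dR_gen:
  fixes g :: "real \<Rightarrow> real"
  assumes g: "(g has_real_derivative g') (at t)" and n: "g t \<noteq> 0"
  shows "((\<lambda>t. 1 + c1 / g t + c2 / (g t)\<^sup>2) has_real_derivative (- (c1 / (g t)^2 + 2 * c2 / (g t)^3) * g')) (at t)"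
proof -
  have n2: "(g t)\<^sup>2 \<noteq> 0" using n by simp
  have d2: "((\<lambda>t. (g t)\<^sup>2) has_real_derivative (of_nat 2 * (g' * (g t) ^ (2 - Suc 0)))) (at t)"
    by (rule DERIV_power[OF g])
  have "((\<lambda>t. 1 + c1 / g t + c2 / (g t)\<^sup>2) has_real_derivative
     (0 + (0 * g t - c1 * g') / (g t * g t) + (0 * (g t)\<^sup>2 - c2 * (of_nat 2 * (g' * (g t) ^ (2 - Suc 0)))) / ((g t)\<^sup>2 * (g t)\<^sup>2))) (at t)"
    by (intro DERIV_add DERIV_const DERIV_divide g d2 n n2)
  then show ?thesis
    by (rule DERIV_cong) (use n in \<open>simp add: field_simps power2_eq_square power3_eq_cube\<close>)
qed


lemma dQ_gen:
  fixes g :: "real \<Rightarrow> real"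
  assumes g: "(g has_real_derivative g') (at t)" and n: "g t \<noteq> 0" and mm: "mm \<noteq> 0"
  shows "((\<lambda>t. c0 + c2 / g t + g t / mm) has_real_derivative ((1 / mm - c2 / (g t)^2) * g')) (at t)"
proof -
  have "((\<lambda>t. c0 + c2 / g t + g t / mm) has_real_derivative
     (0 + (0 * g t - c2 * g') / (g t * g t) + (g' * mm - g t * 0) / (mm * mm))) (at t)"
    by (intro DERIV_add DERIV_const DERIV_divide g n mm)
  then show ?thesis
    by (rule DERIV_cong) (use n mm in \<open>simp add: field_simps power2_eq_square\<close>)
qed

lemma alpha_deriv: "((\<lambda>t. alpha k \<xi> t) has_real_derivative dalpha k \<xi> t) (at t)"
proof -
  have ds: "((\<lambda>t. \<xi> - real_of_int k * t) has_real_derivative (0 - real_of_int k)) (at t)"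
    by (rule DERIV_diff[OF DERIV_const DERIV_cmult_Id])
  have "((\<lambda>t. (real_of_int k)\<^sup>2 + (\<xi> - real_of_int k * t)\<^sup>2) has_real_derivative
      (0 + of_nat 2 * ((0 - real_of_int k) * (\<xi> - real_of_int k * t) ^ (2 - Suc 0)))) (at t)"
    by (intro DERIV_add DERIV_const DERIV_power ds)
  then show ?thesis unfolding alpha_def[abs_def] dalpha_def
    by (rule DERIV_cong) (simp add: algebra_simps)
qed

lemma dalpha_deriv: "((\<lambda>t. dalpha k \<xi> t) has_real_derivative 2 * (real_of_int k)\<^sup>2) (at t)"
proof -
  have ds: "((\<lambda>t. \<xi> - real_of_int k * t) has_real_derivative (0 - real_of_int k)) (at t)"
    by (rule DERIV_diff[OF DERIV_const DERIV_cmult_Id])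
  have "((\<lambda>t. - 2 * real_of_int k * (\<xi> - real_of_int k * t)) has_real_derivative
      (- 2 * real_of_int k) * (0 - real_of_int k)) (at t)"
    by (rule DERIV_cmult[OF ds])
  then show ?thesis unfolding dalpha_def[abs_def]
    by (rule DERIV_cong) (simp add: power2_eq_square)
qed

lemma Rf_deriv: assumes "k \<noteq> 0"
  shows "((\<lambda>t. Rf e mm k \<xi> t) has_real_derivative
     (- (4*pi*e\<^sup>2 / (alpha k \<xi> t)^2 + 4 * (real_of_int k)\<^sup>2 * mm / (alpha k \<xi> t)^3) * dalpha k \<xi> t)) (at t)"
proof -
  have a: "alpha k \<xi> t \<noteq> 0" using alpha_facts(4)[OF assms(1), of \<xi> t] by linarith
  have "((\<lambda>t. 1 + 4*pi*e\<^sup>2 / alpha k \<xi> t + (2 * (real_of_int k)\<^sup>2 * mm) / (alpha k \<xi> t)\<^sup>2) has_real_derivative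
     (- (4*pi*e\<^sup>2 / (alpha k \<xi> t)^2 + 2 * (2 * (real_of_int k)\<^sup>2 * mm) / (alpha k \<xi> t)^3) * dalpha k \<xi> t)) (at t)"
    by (rule dR_gen[OF alpha_deriv a])
  then show ?thesis unfolding Rf_def[abs_def] by (rule DERIV_cong) (simp add: algebra_simps)
qed

lemma Qf_deriv: assumes "k \<noteq> 0" "mm > 0"
  shows "((\<lambda>t. Qf e mm k \<xi> t) has_real_derivative
     ((1/mm - 2 * (real_of_int k)\<^sup>2 / (alpha k \<xi> t)^2) * dalpha k \<xi> t)) (at t)"
proof -
  have a: "alpha k \<xi> t \<noteq> 0" using alpha_facts(4)[OF assms(1), of \<xi> t] by linarith
  have "mm \<noteq> 0" using assms by simp
  from dQ_gen[OF alpha_deriv a this, of "4*pi*e\<^sup>2/mm" "2 * (real_of_int k)\<^sup>2"]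
  show ?thesis unfolding Qf_def[abs_def] .
qed

lemma h2_deriv: assumes "k \<noteq> 0"
  shows "((\<lambda>t. h2 k \<xi> t) has_real_derivative
     ((real_of_int k)\<^sup>2 / (2 * alpha k \<xi> t) - (dalpha k \<xi> t)^2 / (4 * (alpha k \<xi> t)^2))) (at t)"
proof -
  have a: "alpha k \<xi> t \<noteq> 0" using alpha_facts(4)[OF assms(1), of \<xi> t] by linarith
  have "((\<lambda>t. (1/4) * dalpha k \<xi> t / alpha k \<xi> t) has_real_derivative
     ((1/4) * (2 * (real_of_int k)\<^sup>2) * alpha k \<xi> t - (1/4) * dalpha k \<xi> t * dalpha k \<xi> t) / (alpha k \<xi> t * alpha k \<xi> t)) (at t)"
    by (intro DERIV_divide DERIV_cmult dalpha_deriv alpha_deriv a)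
  then show ?thesis unfolding h2_def[abs_def]
    by (rule DERIV_cong) (use a in \<open>simp add: field_simps power2_eq_square\<close>)
qed

lemma G_deriv: assumes "k \<noteq> 0"
  shows "((\<lambda>t. arctan (t - \<xi> / real_of_int k)) has_real_derivative
     ((real_of_int k)\<^sup>2 / alpha k \<xi> t)) (at t)"
proof -
  have a: "alpha k \<xi> t \<noteq> 0" using alpha_facts(4)[OF assms(1), of \<xi> t] by linarith
  have k: "real_of_int k \<noteq> 0" using assms by simp
  have eq: "1 + (t - \<xi> / real_of_int k)^2 = alpha k \<xi> t / (real_of_int k)\<^sup>2"
    using k unfolding alpha_def by (simp add: field_simps power2_eq_square)
  have ds: "((\<lambda>t. t - \<xi> / real_of_int k) has_real_derivative (1 - 0)) (at t)"
    by (rule DERIV_diff[OF DERIV_ident DERIV_const])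
  have "((\<lambda>t. arctan (t - \<xi> / real_of_int k)) has_real_derivative inverse (1 + (t - \<xi> / real_of_int k)\<^sup>2) * (1 - 0)) (at t)"
    by (rule DERIV_chain2[OF DERIV_arctan ds])
  then show ?thesis unfolding eq by (rule DERIV_cong) (use a k in simp)
qed

lemma mono_within:
  fixes f f' :: "real \<Rightarrow> real"
  assumes d: "\<And>x. x \<ge> 0 \<Longrightarrow> (f has_real_derivative f' x) (at x within {0..})"
    and n: "\<And>x. x \<ge> 0 \<Longrightarrow> f' x \<ge> 0" and t: "t \<ge> 0"
  shows "f 0 \<le> f t"
proof (rule DERIV_nonneg_imp_increasing_open[OF t])
  fix x assume x: "0 < x" "x < t"
  have "at x within {0..} = at x" by (rule at_within_interior) (use x in auto)
  then show "\<exists>y. (f has_real_derivative y) (at x) \<and> 0 \<le> y"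
    using d[of x] n[of x] x by auto
next
  have "continuous_on {0..} f"
    using d by (auto intro!: continuous_at_imp_continuous_on simp: continuous_on_eq_continuous_within intro: DERIV_continuous)
  then show "continuous_on {0..t} f" by (rule continuous_on_subset) auto
qed

lemma pt_bound:
  fixes a \<beta> a' \<beta>' c1 c2 r \<phi> :: real
  assumes a: "a > 0" and r: "\<bar>r\<bar> \<le> c1 * c2" and c: "c1 \<ge> 0" "c2 \<ge> 0"
    and b: "\<bar>\<beta>\<bar> \<le> 1/2" and ph: "\<bar>a'\<bar> / a + \<bar>\<beta>'\<bar> \<le> \<phi>"
  shows "\<bar>a' * c1\<^sup>2 + 2 * \<beta>' * r - c2\<^sup>2 * a' / a\<^sup>2\<bar> \<le> 2 * \<phi> * (a * c1\<^sup>2 + 2 * \<beta> * r + c2\<^sup>2 / a)"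
    "a * c1\<^sup>2 + 2 * \<beta> * r + c2\<^sup>2 / a \<ge> (a * c1\<^sup>2 + c2\<^sup>2 / a) / 2"
    "a * c1\<^sup>2 + 2 * \<beta> * r + c2\<^sup>2 / a \<le> 3 * (a * c1\<^sup>2 + c2\<^sup>2 / a) / 2"
proof -
  define S where "S = a * c1\<^sup>2 + c2\<^sup>2 / a"
  have "a * c1\<^sup>2 + c2\<^sup>2 / a - 2 * c1 * c2 = (a * c1 - c2)\<^sup>2 / a"
    using a by (simp add: field_simps power2_eq_square)
  also have "\<dots> \<ge> 0" using a by simp
  finally have S2: "2 * \<bar>r\<bar> \<le> S" unfolding S_def using r by linarith
  have S0: "S \<ge> 0" using S2 by simp
  have br: "\<bar>2 * \<beta> * r\<bar> \<le> S / 2"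
  proof -
    have "\<bar>2 * \<beta> * r\<bar> = \<bar>\<beta>\<bar> * (2 * \<bar>r\<bar>)" by (simp add: abs_mult)
    also have "\<dots> \<le> (1/2) * S" using b S2 by (intro mult_mono) auto
    finally show ?thesis by simp
  qed
  have Ee: "a * c1\<^sup>2 + 2 * \<beta> * r + c2\<^sup>2 / a = S + 2 * \<beta> * r" unfolding S_def by simp
  have br2: "- (S / 2) \<le> 2 * \<beta> * r" "2 * \<beta> * r \<le> S / 2" using br unfolding abs_le_iff by linarith+
  show lo: "a * c1\<^sup>2 + 2 * \<beta> * r + c2\<^sup>2 / a \<ge> (a * c1\<^sup>2 + c2\<^sup>2 / a) / 2"
    unfolding Ee S_def[symmetric] using br2 by linarith
  show "a * c1\<^sup>2 + 2 * \<beta> * r + c2\<^sup>2 / a \<le> 3 * (a * c1\<^sup>2 + c2\<^sup>2 / a) / 2"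
    unfolding Ee S_def[symmetric] using br2 by linarith
  have e1: "a' * c1\<^sup>2 - c2\<^sup>2 * a' / a\<^sup>2 = (a' / a) * (a * c1\<^sup>2 - c2\<^sup>2 / a)"
    using a by (simp add: field_simps power2_eq_square)
  have "\<bar>a * c1\<^sup>2 - c2\<^sup>2 / a\<bar> \<le> S" unfolding S_def using a by (auto simp: abs_le_iff)
  then have t1: "\<bar>a' * c1\<^sup>2 - c2\<^sup>2 * a' / a\<^sup>2\<bar> \<le> (\<bar>a'\<bar> / a) * S"
    unfolding e1 abs_mult abs_divide abs_of_pos[OF a] by (intro mult_left_mono) (use a in auto)
  have t2: "\<bar>2 * \<beta>' * r\<bar> \<le> \<bar>\<beta>'\<bar> * S"
  proof -
    have "\<bar>2 * \<beta>' * r\<bar> = \<bar>\<beta>'\<bar> * (2 * \<bar>r\<bar>)" by (simp add: abs_mult)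
    also have "\<dots> \<le> \<bar>\<beta>'\<bar> * S" using S2 by (intro mult_left_mono) auto
    finally show ?thesis .
  qed
  have "\<bar>a' * c1\<^sup>2 + 2 * \<beta>' * r - c2\<^sup>2 * a' / a\<^sup>2\<bar> \<le> (\<bar>a'\<bar> / a + \<bar>\<beta>'\<bar>) * S"
    using t1 t2 by (simp add: algebra_simps)
  also have "\<dots> \<le> \<phi> * S" using ph S0 by (intro mult_right_mono) auto
  also have "\<dots> \<le> 2 * \<phi> * (a * c1\<^sup>2 + 2 * \<beta> * r + c2\<^sup>2 / a)"
  proof -
    have "0 \<le> \<bar>a'\<bar> / a + \<bar>\<beta>'\<bar>" using a by simp
    then have "\<phi> \<ge> 0" using ph by linarith
    moreover have "S \<le> 2 * (a * c1\<^sup>2 + 2 * \<beta> * r + c2\<^sup>2 / a)" unfolding Ee using br2(1) by (simp add: algebra_simps)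
    ultimately have "\<phi> * S \<le> \<phi> * (2 * (a * c1\<^sup>2 + 2 * \<beta> * r + c2\<^sup>2 / a))" by (intro mult_left_mono)
    then show ?thesis by (simp add: mult.assoc mult.left_commute)
  qed
  finally show "\<bar>a' * c1\<^sup>2 + 2 * \<beta>' * r - c2\<^sup>2 * a' / a\<^sup>2\<bar> \<le> 2 * \<phi> * (a * c1\<^sup>2 + 2 * \<beta> * r + c2\<^sup>2 / a)" .
qed

lemma cancel_alg:
  fixes A M P h \<beta> u1 v1 u2 v2 :: real
  assumes "A > 0" "M > 0" "P = M * A * A" "\<beta> = h / (M * A)"
  shows "A * (2 * u1 * (- h * u1 - M * u2) + 2 * v1 * (- h * v1 - M * v2))
    + 2 * \<beta> * ((- h * u1 - M * u2) * u2 + u1 * (P * u1 + h * u2) + (- h * v1 - M * v2) * v2 + v1 * (P * v1 + h * v2))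
    + (2 * u2 * (P * u1 + h * u2) + 2 * v2 * (P * v1 + h * v2)) / A = 0"
proof -
  have a: "A \<noteq> 0" "M \<noteq> 0" using assms by auto
  have "2 * \<beta> * ((- h * u1 - M * u2) * u2 + u1 * (P * u1 + h * u2) + (- h * v1 - M * v2) * v2 + v1 * (P * v1 + h * v2))
     = 2 * h * A * (u1 * u1 + v1 * v1) - 2 * h * (u2 * u2 + v2 * v2) / A"
    unfolding assms(3,4) using a by (simp add: field_simps)
  moreover have "(2 * u2 * (P * u1 + h * u2) + 2 * v2 * (P * v1 + h * v2)) / A
     = 2 * M * A * (u1 * u2 + v1 * v2) + 2 * h * (u2 * u2 + v2 * v2) / A"
    unfolding assms(3) using a by (simp add: field_simps)
  ultimately show ?thesis by (simp add: algebra_simps)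
qed

definition Kc :: "real \<Rightarrow> real \<Rightarrow> real" where
  "Kc e mm = 2*pi*e\<^sup>2 + 2*mm + 2 / sqrt (4*pi*e\<^sup>2/mm)"

lemma beta'_abs:
  fixes al da K2 Q Q' h h' c0 mm :: real
  assumes al: "al \<ge> 1" "al \<ge> K2" "K2 \<ge> 1" and d: "da\<^sup>2 \<le> 4 * K2 * al" "\<bar>da\<bar> \<le> al"
    and hh: "h = (1/4) * da / al" "h' = K2 / (2 * al) - da\<^sup>2 / (4 * al\<^sup>2)"
    and c0: "c0 > 0" and mm: "mm > 0"
    and Q: "Q = c0 + 2 * K2 / al + al / mm" "Q' = (1/mm - 2 * K2 / al\<^sup>2) * da"
  shows "\<bar>(h' * sqrt Q - h * (Q' / (2 * sqrt Q))) / (sqrt Q * sqrt Q)\<bar> \<le> 2 * K2 / (al * sqrt c0)"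
proof -
  have alp: "al > 0" using al by simp
  have Qp: "Q > 0" using Q alp c0 mm al by (simp add: add_pos_nonneg)
  have Qc: "Q \<ge> c0" using Q alp mm al by simp
  have sQ: "sqrt Q \<ge> sqrt c0" using Qc by simp
  have sc: "sqrt c0 > 0" using c0 by simp
  have eq: "(h' * sqrt Q - h * (Q' / (2 * sqrt Q))) / (sqrt Q * sqrt Q) = (h' - h * Q' / (2 * Q)) / sqrt Q"
    using Qp by (simp add: field_simps)
  have h1: "\<bar>h'\<bar> \<le> 3 * K2 / (2 * al)"
  proof -
    have "da\<^sup>2 / (4 * al\<^sup>2) \<le> 4 * K2 * al / (4 * al\<^sup>2)" using d alp by (intro divide_right_mono) auto
    also have "\<dots> = K2 / al" using alp by (simp add: power2_eq_square)
    finally have "da\<^sup>2 / (4 * al\<^sup>2) \<le> K2 / al" .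
    moreover have "da\<^sup>2 / (4 * al\<^sup>2) \<ge> 0" by simp
    moreover have "K2 / (2 * al) \<ge> 0" using al by simp
    moreover have "K2 / al = 2 * (K2 / (2 * al))" "3 * K2 / (2 * al) = 3 * (K2 / (2 * al))" using alp by simp_all
    ultimately show ?thesis unfolding hh abs_le_iff by linarith
  qed
  have qq: "\<bar>Q'\<bar> \<le> Q * \<bar>da\<bar> / al"
  proof -
    have "\<bar>Q'\<bar> \<le> (1/mm + 2 * K2 / al\<^sup>2) * \<bar>da\<bar>" unfolding Q abs_mult
      using mm al by (intro mult_right_mono) (auto simp: abs_le_iff)
    also have "\<dots> = (al / mm + 2 * K2 / al) * \<bar>da\<bar> / al" using alp by (simp add: field_simps power2_eq_square)
    also have "\<dots> \<le> Q * \<bar>da\<bar> / al" using Q c0 alp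
      by (intro divide_right_mono mult_right_mono) auto
    finally show ?thesis .
  qed
  have h2: "\<bar>h * Q' / (2 * Q)\<bar> \<le> K2 / (2 * al)"
  proof -
    have "\<bar>h * Q' / (2 * Q)\<bar> = \<bar>h\<bar> * \<bar>Q'\<bar> / (2 * Q)" using Qp by (simp add: abs_mult)
    also have "\<dots> \<le> \<bar>h\<bar> * (Q * \<bar>da\<bar> / al) / (2 * Q)" using qq Qp
      by (intro divide_right_mono mult_left_mono) auto
    also have "\<dots> = da\<^sup>2 / (8 * al\<^sup>2)" unfolding hh using Qp alp
      by (simp add: abs_mult field_simps power2_eq_square)
    also have "\<dots> \<le> 4 * K2 * al / (8 * al\<^sup>2)" using d alp by (intro divide_right_mono) auto
    also have "\<dots> = K2 / (2 * al)" using alp by (simp add: power2_eq_square)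
    finally show ?thesis .
  qed
  have "\<bar>h' - h * Q' / (2 * Q)\<bar> \<le> \<bar>h'\<bar> + \<bar>h * Q' / (2 * Q)\<bar>" by (rule abs_triangle_ineq4)
  also have "\<dots> \<le> 3 * K2 / (2 * al) + K2 / (2 * al)" using h1 h2 by (rule add_mono)
  also have "\<dots> = 2 * K2 / al" using alp by (simp add: field_simps)
  finally have "\<bar>h' - h * Q' / (2 * Q)\<bar> \<le> 2 * K2 / al" .
  then have X: "\<bar>h' - h * Q' / (2 * Q)\<bar> \<le> 2 * K2 / al" .
  have "\<bar>(h' - h * Q' / (2 * Q)) / sqrt Q\<bar> = \<bar>h' - h * Q' / (2 * Q)\<bar> / sqrt Q" using Qp by (simp add: abs_divide)
  also have "\<dots> \<le> (2 * K2 / al) / sqrt Q" by (rule divide_right_mono) (use X Qp in auto)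
  also have "\<dots> \<le> (2 * K2 / al) / sqrt c0"
    by (rule divide_left_mono) (use sQ sc alp al Qp in auto)
  finally have "\<bar>(h' - h * Q' / (2 * Q)) / sqrt Q\<bar> \<le> (2 * K2 / al) / sqrt c0" .
  then show ?thesis unfolding eq by (simp add: field_simps)
qed

lemma coef_bounds:
  fixes \<xi> t :: real
  assumes k: "k \<noteq> 0" and e: "e > 0" and mm: "mm > 0"
  defines "R \<equiv> Rf e mm k \<xi> t" and "Q \<equiv> Qf e mm k \<xi> t" and "al \<equiv> alpha k \<xi> t" and "da \<equiv> dalpha k \<xi> t"
    and "K2 \<equiv> (real_of_int k)\<^sup>2"
  shows "1 \<le> R" "R \<le> 1 + 4*pi*e\<^sup>2 + 2*mm" "Q > 0" "\<bar>h2 k \<xi> t / sqrt Q\<bar> \<le> 1/2"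
    "\<bar>(- (4*pi*e\<^sup>2 / al^2 + 4 * K2 * mm / al^3) * da) / (2 * sqrt R)\<bar> / sqrt R
      + \<bar>((K2 / (2 * al) - da^2 / (4 * al^2)) * sqrt Q - h2 k \<xi> t * (((1/mm - 2 * K2 / al^2) * da) / (2 * sqrt Q))) / (sqrt Q * sqrt Q)\<bar>
      \<le> Kc e mm * K2 / al"
proof -
  note af = alpha_facts(1)[OF k, of \<xi> t] alpha_facts(2)[OF k] alpha_facts(3-6)[OF k, of \<xi> t]
  note af = af[folded al_def da_def K2_def]
  have alp: "al > 0" "al \<ge> 1" "al \<ge> K2" "K2 \<ge> 1" using af by auto
  have c1: "4*pi*e\<^sup>2 > 0" using e by simp
  have i1: "1 / al \<le> K2 / al" using alp by (intro divide_right_mono) auto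
  have i2: "K2 / al^2 \<le> K2 / al" using alp by (intro divide_left_mono) (auto simp: power2_eq_square)
  have i3: "1 / al \<le> 1" using alp by simp
  have i4: "K2 / al \<le> 1" using alp by simp
  have Rdef: "R = 1 + 4*pi*e\<^sup>2 * (1 / al) + 2 * mm * (K2 / al\<^sup>2)" unfolding R_def Rf_def al_def K2_def by simp
  show R1: "1 \<le> R" unfolding Rdef using alp mm c1 by (simp add: add_nonneg_nonneg)
  have "4*pi*e\<^sup>2 * (1 / al) \<le> 4*pi*e\<^sup>2 * 1" using i3 c1 by (intro mult_left_mono) auto
  moreover have "2 * mm * (K2 / al\<^sup>2) \<le> 2 * mm * 1" using i2 i4 mm by (intro mult_left_mono) auto
  ultimately show "R \<le> 1 + 4*pi*e\<^sup>2 + 2*mm" unfolding Rdef by linarith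
  have c0: "4*pi*e\<^sup>2/mm > 0" using e mm by simp
  have Qdef: "Q = 4*pi*e\<^sup>2/mm + 2 * K2 / al + al / mm" unfolding Q_def Qf_def al_def K2_def by simp
  show Qp: "Q > 0" unfolding Qdef using c0 alp mm by (simp add: add_pos_nonneg)
  have hdef: "h2 k \<xi> t = (1/4) * da / al" unfolding h2_def da_def al_def by simp
  show "\<bar>h2 k \<xi> t / sqrt Q\<bar> \<le> 1/2"
  proof -
    have "(h2 k \<xi> t)\<^sup>2 = da\<^sup>2 / (16 * al\<^sup>2)" unfolding hdef by (simp add: power2_eq_square)
    also have "\<dots> \<le> 4 * K2 * al / (16 * al\<^sup>2)" using af by (intro divide_right_mono) auto
    also have "\<dots> = (1/8) * (2 * K2 / al)" using alp by (simp add: field_simps power2_eq_square)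
    also have "\<dots> \<le> (1/8) * Q" unfolding Qdef using c0 alp mm by simp
    finally have hq: "(h2 k \<xi> t)\<^sup>2 \<le> Q / 8" by simp
    have "(h2 k \<xi> t / sqrt Q)\<^sup>2 = (h2 k \<xi> t)\<^sup>2 / Q" using Qp by (simp add: power_divide)
    also have "\<dots> \<le> 1/8" using hq Qp by (simp add: field_simps)
    also have "\<dots> \<le> (1/2)\<^sup>2" by (simp add: power2_eq_square)
    finally have "(h2 k \<xi> t / sqrt Q)\<^sup>2 \<le> (1/2)\<^sup>2" .
    then have "\<bar>h2 k \<xi> t / sqrt Q\<bar>\<^sup>2 \<le> (1/2)\<^sup>2" by (simp only: power2_abs)
    then show ?thesis by (rule power2_le_imp_le) simp
  qed
  have b2: "\<bar>((K2 / (2 * al) - da^2 / (4 * al^2)) * sqrt Q - h2 k \<xi> t * (((1/mm - 2 * K2 / al^2) * da) / (2 * sqrt Q))) / (sqrt Q * sqrt Q)\<bar>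
      \<le> 2 * K2 / (al * sqrt (4*pi*e\<^sup>2/mm))"
    by (rule beta'_abs[OF alp(2,3,4) af(6)[folded K2_def] af(5) hdef refl c0 mm Qdef refl])
  have b1: "\<bar>(- (4*pi*e\<^sup>2 / al^2 + 4 * K2 * mm / al^3) * da) / (2 * sqrt R)\<bar> / sqrt R \<le> (2*pi*e\<^sup>2 + 2*mm) * K2 / al"
  proof -
    have sR: "sqrt R * sqrt R = R" using R1 by simp
    have "\<bar>(- (4*pi*e\<^sup>2 / al^2 + 4 * K2 * mm / al^3) * da) / (2 * sqrt R)\<bar> / sqrt R
       = (4*pi*e\<^sup>2 / al^2 + 4 * K2 * mm / al^3) * \<bar>da\<bar> / (2 * R)"
    proof -
      define W where "W = 4*pi*e\<^sup>2 / al^2 + 4 * K2 * mm / al^3"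
      have W0: "W \<ge> 0" unfolding W_def using alp mm c1 by (intro add_nonneg_nonneg) auto
      have sR0: "sqrt R > 0" using R1 by simp
      have "\<bar>(- W * da) / (2 * sqrt R)\<bar> = W * \<bar>da\<bar> / (2 * sqrt R)"
        using W0 sR0 by (simp add: abs_mult abs_divide)
      then have "\<bar>(- W * da) / (2 * sqrt R)\<bar> / sqrt R = W * \<bar>da\<bar> / (2 * (sqrt R * sqrt R))" by simp
      then show ?thesis unfolding W_def[symmetric] sR .
    qed
    also have "\<dots> \<le> (4*pi*e\<^sup>2 / al^2 + 4 * K2 * mm / al^3) * al / 2"
    proof -
      have "(4*pi*e\<^sup>2 / al^2 + 4 * K2 * mm / al^3) * \<bar>da\<bar> \<le> (4*pi*e\<^sup>2 / al^2 + 4 * K2 * mm / al^3) * al"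
        using af(5) alp mm c1 by (intro mult_left_mono) (auto intro!: add_nonneg_nonneg)
      moreover have "(4*pi*e\<^sup>2 / al^2 + 4 * K2 * mm / al^3) * \<bar>da\<bar> / (2 * R) \<le> (4*pi*e\<^sup>2 / al^2 + 4 * K2 * mm / al^3) * \<bar>da\<bar> / 2"
        using R1 alp mm c1 by (intro divide_left_mono) (auto intro!: add_nonneg_nonneg mult_nonneg_nonneg)
      moreover have "(4*pi*e\<^sup>2 / al^2 + 4 * K2 * mm / al^3) * \<bar>da\<bar> / 2 \<le> (4*pi*e\<^sup>2 / al^2 + 4 * K2 * mm / al^3) * al / 2"
        using calculation(1) by (rule divide_right_mono) simp
      ultimately show ?thesis by (meson order_trans)
    qed
    also have "\<dots> = 2*pi*e\<^sup>2 * (1 / al) + 2 * mm * (K2 / al\<^sup>2)"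
      using alp by (simp add: field_simps power2_eq_square power3_eq_cube)
    also have "\<dots> \<le> 2*pi*e\<^sup>2 * (K2 / al) + 2 * mm * (K2 / al)"
      using i1 i2 mm c1 by (intro add_mono mult_left_mono) auto
    also have "\<dots> = (2*pi*e\<^sup>2 + 2*mm) * K2 / al" using alp by (simp add: field_simps)
    finally show ?thesis .
  qed
  have "2 * K2 / (al * sqrt (4*pi*e\<^sup>2/mm)) = (2 / sqrt (4*pi*e\<^sup>2/mm)) * K2 / al" by simp
  show "\<bar>(- (4*pi*e\<^sup>2 / al^2 + 4 * K2 * mm / al^3) * da) / (2 * sqrt R)\<bar> / sqrt R
      + \<bar>((K2 / (2 * al) - da^2 / (4 * al^2)) * sqrt Q - h2 k \<xi> t * (((1/mm - 2 * K2 / al^2) * da) / (2 * sqrt Q))) / (sqrt Q * sqrt Q)\<bar>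
      \<le> Kc e mm * K2 / al"
  proof -
    have e1: "Kc e mm * K2 / al = (2*pi*e\<^sup>2 + 2*mm) * K2 / al + (2 / sqrt (4*pi*e\<^sup>2/mm)) * K2 / al"
      unfolding Kc_def by (simp add: distrib_right add_divide_distrib)
    show ?thesis unfolding e1 using add_mono[OF b1 b2] \<open>2 * K2 / (al * sqrt (4*pi*e\<^sup>2/mm)) = (2 / sqrt (4*pi*e\<^sup>2/mm)) * K2 / al\<close>
      by simp
  qed
qed

lemma energy_evol:
  fixes \<xi> :: real
  assumes k: "k \<noteq> 0" and e: "e > 0" and mm: "mm > 0" and sol: "is_sol e mm k \<xi> B1 B2"
  defines "c \<equiv> 2 * Kc e mm"
  defines "S \<equiv> \<lambda>t. sqrt (Rf e mm k \<xi> t) * (cmod (B1 t))\<^sup>2 + (cmod (B2 t))\<^sup>2 / sqrt (Rf e mm k \<xi> t)"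
  shows "\<And>t. t \<ge> 0 \<Longrightarrow> exp (- c * pi) * energy e mm k \<xi> B1 B2 0 \<le> energy e mm k \<xi> B1 B2 t"
    "\<And>t. t \<ge> 0 \<Longrightarrow> energy e mm k \<xi> B1 B2 t \<le> exp (c * pi) * energy e mm k \<xi> B1 B2 0"
    "\<And>t. S t / 2 \<le> energy e mm k \<xi> B1 B2 t"
    "\<And>t. energy e mm k \<xi> B1 B2 t \<le> 3 * S t / 2"
    "\<And>t. 1 \<le> sqrt (Rf e mm k \<xi> t)"
    "\<And>t. sqrt (Rf e mm k \<xi> t) \<le> sqrt (1 + 4*pi*e\<^sup>2 + 2*mm)"
proof -
  define R where "R = Rf e mm k \<xi>"
  define Q where "Q = Qf e mm k \<xi>"
  define H where "H = h2 k \<xi>"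
  define M where "M = m2 mm k \<xi>"
  define P where "P = p2 e mm k \<xi>"
  define A where "A = (\<lambda>t. sqrt (R t))"
  define \<beta> where "\<beta> = (\<lambda>t. H t / sqrt (Q t))"
  define al where "al = alpha k \<xi>"
  define da where "da = dalpha k \<xi>"
  define K2 where "K2 = (real_of_int k)\<^sup>2"
  define u1 where "u1 = (\<lambda>t. Re (B1 t))"
  define v1 where "v1 = (\<lambda>t. Im (B1 t))"
  define u2 where "u2 = (\<lambda>t. Re (B2 t))"
  define v2 where "v2 = (\<lambda>t. Im (B2 t))"
  define Ef where "Ef = (\<lambda>t. A t * ((u1 t)\<^sup>2 + (v1 t)\<^sup>2) + 2 * \<beta> t * (u1 t * u2 t + v1 t * v2 t) + ((u2 t)\<^sup>2 + (v2 t)\<^sup>2) / A t)"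
  have R1: "\<And>t. 1 \<le> R t" unfolding R_def using coef_bounds(1)[OF k e mm] by blast
  have Qp: "\<And>t. 0 < Q t" unfolding Q_def using coef_bounds(3)[OF k e mm] by blast
  have Mp: "\<And>t. 0 < M t" unfolding M_def m2_def using alpha_facts(4)[OF k] mm by simp
  have PMR: "\<And>t. P t = M t * R t" unfolding P_def M_def R_def by (rule p2_eq[OF k mm])
  have MPQ: "\<And>t. M t * P t = Q t" unfolding P_def M_def Q_def by (rule mp_eq[OF k mm])
  have Ap: "\<And>t. A t > 0" unfolding A_def using R1 by (smt (verit) real_sqrt_gt_zero)
  have AA: "\<And>t. A t * A t = R t" unfolding A_def using R1 by (smt (verit) real_sqrt_mult_self)
  have sQ: "\<And>t. sqrt (Q t) = M t * A t"
  proof -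
    fix t
    have "Q t = (M t * A t)\<^sup>2" using MPQ[of t] PMR[of t] AA[of t]
      by (simp add: power2_eq_square algebra_simps) (metis mult.assoc mult.commute)
    then show "sqrt (Q t) = M t * A t" using Mp[of t] Ap[of t] by simp
  qed
  have cm1: "\<And>t. (cmod (B1 t))\<^sup>2 = (u1 t)\<^sup>2 + (v1 t)\<^sup>2" unfolding u1_def v1_def by (simp add: cmod_power2)
  have cm2: "\<And>t. (cmod (B2 t))\<^sup>2 = (u2 t)\<^sup>2 + (v2 t)\<^sup>2" unfolding u2_def v2_def by (simp add: cmod_power2)
  have ren: "\<And>t. Re (B1 t * cnj (B2 t)) = u1 t * u2 t + v1 t * v2 t" unfolding u1_def v1_def u2_def v2_def by simp
  have EE: "\<And>t. energy e mm k \<xi> B1 B2 t = Ef t"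
  proof -
    fix t
    have "sqrt (P t / M t) = A t" unfolding A_def PMR using Mp[of t] by simp
    moreover have "sqrt (M t * P t) = sqrt (Q t)" using MPQ by simp
    moreover have "sqrt (M t / P t) = 1 / A t" unfolding A_def PMR using Mp[of t] by (simp add: real_sqrt_divide)
    ultimately show "energy e mm k \<xi> B1 B2 t = Ef t"
      unfolding energy_def Ef_def \<beta>_def cm1 cm2 ren P_def[symmetric] M_def[symmetric] H_def[symmetric]
      by (simp add: field_simps)
  qed
  show "\<And>t. 1 \<le> sqrt (Rf e mm k \<xi> t)" using R1 unfolding R_def by simp
  show "\<And>t. sqrt (Rf e mm k \<xi> t) \<le> sqrt (1 + 4*pi*e\<^sup>2 + 2*mm)" using coef_bounds(2)[OF k e mm] by simp
  define A' where "A' = (\<lambda>t. (- (4*pi*e\<^sup>2 / (al t)^2 + 4 * K2 * mm / (al t)^3) * da t) / (2 * sqrt (R t)))"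
  define \<beta>' where "\<beta>' = (\<lambda>t. ((K2 / (2 * al t) - (da t)^2 / (4 * (al t)^2)) * sqrt (Q t) - H t * (((1/mm - 2 * K2 / (al t)^2) * da t) / (2 * sqrt (Q t)))) / (sqrt (Q t) * sqrt (Q t)))"
  have dA: "\<And>t. (A has_real_derivative A' t) (at t)"
  proof -
    fix t
    have "((\<lambda>t. sqrt (R t)) has_real_derivative (inverse (sqrt (R t)) / 2 * ((- (4*pi*e\<^sup>2 / (al t)^2 + 4 * K2 * mm / (al t)^3) * da t)))) (at t)"
      unfolding R_def al_def K2_def da_def
      by (rule DERIV_chain2[OF DERIV_real_sqrt Rf_deriv[OF k]]) (use R1[unfolded R_def] in \<open>smt (verit)\<close>)
    then show "(A has_real_derivative A' t) (at t)" unfolding A_def A'_def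
      by (simp add: field_simps)
  qed
  have dQ: "\<And>t. ((\<lambda>t. sqrt (Q t)) has_real_derivative (((1/mm - 2 * K2 / (al t)^2) * da t) / (2 * sqrt (Q t)))) (at t)"
  proof -
    fix t
    have "((\<lambda>t. sqrt (Q t)) has_real_derivative (inverse (sqrt (Q t)) / 2 * ((1/mm - 2 * K2 / (al t)^2) * da t))) (at t)"
      unfolding Q_def al_def K2_def da_def
      by (rule DERIV_chain2[OF DERIV_real_sqrt Qf_deriv[OF k mm]]) (use Qp[unfolded Q_def] in \<open>smt (verit)\<close>)
    then show "?thesis t" by (simp add: field_simps)
  qed
  have dB: "\<And>t. (\<beta> has_real_derivative \<beta>' t) (at t)"
  proof -
    fix t
    have dH: "(H has_real_derivative (K2 / (2 * al t) - (da t)^2 / (4 * (al t)^2))) (at t)"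
      unfolding H_def K2_def al_def da_def using h2_deriv[OF k] by simp
    show "(\<beta> has_real_derivative \<beta>' t) (at t)" unfolding \<beta>_def \<beta>'_def
      by (rule DERIV_divide[OF dH dQ]) (use Qp in \<open>smt (verit) real_sqrt_gt_zero\<close>)
  qed
  have dsol: "\<And>t. t \<ge> 0 \<Longrightarrow> (u1 has_real_derivative (- H t * u1 t - M t * u2 t)) (at t within {0..}) \<and>
     (v1 has_real_derivative (- H t * v1 t - M t * v2 t)) (at t within {0..}) \<and>
     (u2 has_real_derivative (P t * u1 t + H t * u2 t)) (at t within {0..}) \<and>
     (v2 has_real_derivative (P t * v1 t + H t * v2 t)) (at t within {0..})"
  proof -
    fix t :: real assume t: "t \<ge> 0"
    from sol t have s1: "(B1 has_vector_derivative
            (- complex_of_real (H t) * B1 t - complex_of_real (M t) * B2 t)) (at t within {0..})"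
      and s2: "(B2 has_vector_derivative
            (complex_of_real (P t) * B1 t + complex_of_real (H t) * B2 t)) (at t within {0..})"
      unfolding is_sol_def H_def M_def P_def by auto
    show "?thesis t"
      using has_field_derivative_Re[OF s1] has_field_derivative_Im[OF s1]
        has_field_derivative_Re[OF s2] has_field_derivative_Im[OF s2]
      unfolding u1_def v1_def u2_def v2_def by simp
  qed
  define D where "D = (\<lambda>t. A' t * ((u1 t)\<^sup>2 + (v1 t)\<^sup>2) + 2 * \<beta>' t * (u1 t * u2 t + v1 t * v2 t) - ((u2 t)\<^sup>2 + (v2 t)\<^sup>2) * A' t / (A t)\<^sup>2)"
  have dE: "\<And>t. t \<ge> 0 \<Longrightarrow> (Ef has_real_derivative D t) (at t within {0..})"
  proof -
    fix t :: real assume t: "t \<ge> 0"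
    note ds = dsol[OF t]
    have dA': "(A has_real_derivative A' t) (at t within {0..})" using dA has_field_derivative_at_within by blast
    have dB': "(\<beta> has_real_derivative \<beta>' t) (at t within {0..})" using dB has_field_derivative_at_within by blast
    have ne: "A t \<noteq> 0" using Ap[of t] by simp
    have dd: "(Ef has_real_derivative
       (A' t * ((u1 t)\<^sup>2 + (v1 t)\<^sup>2) + A t * (2 * u1 t * (- H t * u1 t - M t * u2 t) + 2 * v1 t * (- H t * v1 t - M t * v2 t))
        + 2 * (\<beta>' t * (u1 t * u2 t + v1 t * v2 t) + \<beta> t * ((- H t * u1 t - M t * u2 t) * u2 t + u1 t * (P t * u1 t + H t * u2 t) + (- H t * v1 t - M t * v2 t) * v2 t + v1 t * (P t * v1 t + H t * v2 t)))
        + ((2 * u2 t * (P t * u1 t + H t * u2 t) + 2 * v2 t * (P t * v1 t + H t * v2 t)) * A t - ((u2 t)\<^sup>2 + (v2 t)\<^sup>2) * A' t) / (A t * A t)))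
       (at t within {0..})"
      unfolding Ef_def
      by (rule derivative_eq_intros dA' dB' ds[THEN conjunct1] ds[THEN conjunct2, THEN conjunct1]
            ds[THEN conjunct2, THEN conjunct2, THEN conjunct1] ds[THEN conjunct2, THEN conjunct2, THEN conjunct2] refl ne
           | simp only: power2_eq_square)+ (simp add: algebra_simps)
    moreover have eq1: "(A' t * ((u1 t)\<^sup>2 + (v1 t)\<^sup>2) + A t * (2 * u1 t * (- H t * u1 t - M t * u2 t) + 2 * v1 t * (- H t * v1 t - M t * v2 t))
        + 2 * (\<beta>' t * (u1 t * u2 t + v1 t * v2 t) + \<beta> t * ((- H t * u1 t - M t * u2 t) * u2 t + u1 t * (P t * u1 t + H t * u2 t) + (- H t * v1 t - M t * v2 t) * v2 t + v1 t * (P t * v1 t + H t * v2 t)))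
        + ((2 * u2 t * (P t * u1 t + H t * u2 t) + 2 * v2 t * (P t * v1 t + H t * v2 t)) * A t - ((u2 t)\<^sup>2 + (v2 t)\<^sup>2) * A' t) / (A t * A t))
      = D t + (A t * (2 * u1 t * (- H t * u1 t - M t * u2 t) + 2 * v1 t * (- H t * v1 t - M t * v2 t))
    + 2 * \<beta> t * ((- H t * u1 t - M t * u2 t) * u2 t + u1 t * (P t * u1 t + H t * u2 t) + (- H t * v1 t - M t * v2 t) * v2 t + v1 t * (P t * v1 t + H t * v2 t))
    + (2 * u2 t * (P t * u1 t + H t * u2 t) + 2 * v2 t * (P t * v1 t + H t * v2 t)) / A t)"
      unfolding D_def using ne by (simp add: field_simps power2_eq_square)
    moreover have z: "A t * (2 * u1 t * (- H t * u1 t - M t * u2 t) + 2 * v1 t * (- H t * v1 t - M t * v2 t))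
    + 2 * \<beta> t * ((- H t * u1 t - M t * u2 t) * u2 t + u1 t * (P t * u1 t + H t * u2 t) + (- H t * v1 t - M t * v2 t) * v2 t + v1 t * (P t * v1 t + H t * v2 t))
    + (2 * u2 t * (P t * u1 t + H t * u2 t) + 2 * v2 t * (P t * v1 t + H t * v2 t)) / A t = 0"
      by (rule cancel_alg[OF Ap Mp]) (simp_all add: PMR AA[symmetric] \<beta>_def sQ mult.assoc)
    show "(Ef has_real_derivative D t) (at t within {0..})"
      by (rule DERIV_cong[OF dd]) (simp only: eq1 z add_0_right)
  qed
  define \<phi> where "\<phi> = (\<lambda>t. Kc e mm * K2 / al t)"
  have Kc0: "Kc e mm \<ge> 0" unfolding Kc_def using e mm by (simp add: add_nonneg_nonneg)
  have c0: "c \<ge> 0" unfolding c_def using Kc0 by simp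
  have pb: "\<And>t. \<bar>D t\<bar> \<le> 2 * \<phi> t * Ef t \<and> Ef t \<ge> S t / 2 \<and> Ef t \<le> 3 * S t / 2"
  proof -
    fix t
    have r: "\<bar>Re (B1 t * cnj (B2 t))\<bar> \<le> cmod (B1 t) * cmod (B2 t)"
      using abs_Re_le_cmod[of "B1 t * cnj (B2 t)"] by (simp add: norm_mult)
    have b: "\<bar>\<beta> t\<bar> \<le> 1/2" unfolding \<beta>_def H_def Q_def using coef_bounds(4)[OF k e mm] by blast
    have ph: "\<bar>A' t\<bar> / A t + \<bar>\<beta>' t\<bar> \<le> \<phi> t"
      unfolding A'_def A_def \<beta>'_def \<phi>_def R_def Q_def H_def al_def da_def K2_def
      using coef_bounds(5)[OF k e mm] by blast
    note p = pt_bound[OF Ap[of t] r norm_ge_zero norm_ge_zero b ph]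
    have Ee: "Ef t = A t * (cmod (B1 t))\<^sup>2 + 2 * \<beta> t * Re (B1 t * cnj (B2 t)) + (cmod (B2 t))\<^sup>2 / A t"
      unfolding Ef_def cm1 cm2 ren ..
    have De: "D t = A' t * (cmod (B1 t))\<^sup>2 + 2 * \<beta>' t * Re (B1 t * cnj (B2 t)) - (cmod (B2 t))\<^sup>2 * A' t / (A t)\<^sup>2"
      unfolding D_def cm1 cm2 ren ..
    have Se: "S t = A t * (cmod (B1 t))\<^sup>2 + (cmod (B2 t))\<^sup>2 / A t" unfolding S_def A_def R_def ..
    show "\<bar>D t\<bar> \<le> 2 * \<phi> t * Ef t \<and> Ef t \<ge> S t / 2 \<and> Ef t \<le> 3 * S t / 2"
      unfolding Ee De Se using p by auto
  qed
  have Ef0: "\<And>t. Ef t \<ge> 0"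
  proof -
    fix t
    have "S t \<ge> 0" unfolding S_def using R1[unfolded R_def, of t] by (intro add_nonneg_nonneg mult_nonneg_nonneg divide_nonneg_nonneg) auto
    then show "Ef t \<ge> 0" using pb[of t] by linarith
  qed
  define G where "G = (\<lambda>t. arctan (t - \<xi> / real_of_int k))"
  have dG: "\<And>t. (G has_real_derivative K2 / al t) (at t within {0..})"
    unfolding G_def K2_def al_def using G_deriv[OF k] has_field_derivative_at_within by blast
  have cG: "\<And>t. c * (K2 / al t) = 2 * \<phi> t" unfolding c_def \<phi>_def by simp
  have F1: "\<And>t. t \<ge> 0 \<Longrightarrow> Ef 0 * exp (c * G 0) \<le> Ef t * exp (c * G t)"
  proof (rule mono_within[where f = "\<lambda>t. Ef t * exp (c * G t)"])
    fix x :: real assume x: "x \<ge> 0"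
    show "((\<lambda>t. Ef t * exp (c * G t)) has_real_derivative (D x * exp (c * G x) + Ef x * (exp (c * G x) * (c * (K2 / al x))))) (at x within {0..})"
    proof -
      have de: "((\<lambda>t. exp (c * G t)) has_real_derivative exp (c * G x) * (c * (K2 / al x))) (at x within {0..})"
        by (rule DERIV_chain2[OF DERIV_exp DERIV_cmult[OF dG]])
      show ?thesis by (rule DERIV_cong[OF DERIV_mult[OF dE[OF x] de]]) (simp add: algebra_simps)
    qed
    have pbx: "\<bar>D x\<bar> \<le> 2 * \<phi> x * Ef x" using pb by blast
    have eqx: "Ef x * (c * (K2 / al x)) = 2 * \<phi> x * Ef x" using cG[of x] by simp
    have "D x + Ef x * (c * (K2 / al x)) \<ge> 0" using pbx eqx unfolding abs_le_iff by linarith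
    then show "0 \<le> D x * exp (c * G x) + Ef x * (exp (c * G x) * (c * (K2 / al x)))"
    proof -
      have "0 \<le> exp (c * G x) * (D x + Ef x * (c * (K2 / al x)))" using \<open>D x + Ef x * (c * (K2 / al x)) \<ge> 0\<close> by simp
      also have "exp (c * G x) * (D x + Ef x * (c * (K2 / al x))) = D x * exp (c * G x) + Ef x * (exp (c * G x) * (c * (K2 / al x)))"
        by (simp add: algebra_simps)
      finally show ?thesis .
    qed
  qed
  have F2: "\<And>t. t \<ge> 0 \<Longrightarrow> - (Ef 0 * exp (- c * G 0)) \<le> - (Ef t * exp (- c * G t))"
  proof (rule mono_within[where f = "\<lambda>t. - (Ef t * exp (- c * G t))"])
    fix x :: real assume x: "x \<ge> 0"
    show "((\<lambda>t. - (Ef t * exp (- c * G t))) has_real_derivative (- (D x * exp (- c * G x) + Ef x * (exp (- c * G x) * (- c * (K2 / al x)))))) (at x within {0..})"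
    proof -
      have de: "((\<lambda>t. exp (- c * G t)) has_real_derivative exp (- c * G x) * (- c * (K2 / al x))) (at x within {0..})"
        by (rule DERIV_chain2[OF DERIV_exp DERIV_cmult[OF dG]])
      show ?thesis by (rule DERIV_cong[OF DERIV_minus[OF DERIV_mult[OF dE[OF x] de]]]) (simp add: algebra_simps)
    qed
    have pbx: "\<bar>D x\<bar> \<le> 2 * \<phi> x * Ef x" using pb by blast
    have eqx: "Ef x * (c * (K2 / al x)) = 2 * \<phi> x * Ef x" using cG[of x] by simp
    have "Ef x * (c * (K2 / al x)) - D x \<ge> 0" using pbx eqx unfolding abs_le_iff by linarith
    then have "0 \<le> exp (- c * G x) * (Ef x * (c * (K2 / al x)) - D x)" by simp
    then show "0 \<le> - (D x * exp (- c * G x) + Ef x * (exp (- c * G x) * (- c * (K2 / al x))))"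
      by (simp add: algebra_simps)
  qed
  have Gb: "\<And>t. - pi \<le> G t - G 0 \<and> G t - G 0 \<le> pi"
  proof -
    fix t
    show "- pi \<le> G t - G 0 \<and> G t - G 0 \<le> pi" unfolding G_def
      using arctan_lbound[of "t - \<xi> / real_of_int k"] arctan_ubound[of "t - \<xi> / real_of_int k"]
        arctan_lbound[of "0 - \<xi> / real_of_int k"] arctan_ubound[of "0 - \<xi> / real_of_int k"] by linarith
  qed
  have E00: "energy e mm k \<xi> B1 B2 0 \<ge> 0" unfolding EE by (rule Ef0)
  show "\<And>t. t \<ge> 0 \<Longrightarrow> exp (- c * pi) * energy e mm k \<xi> B1 B2 0 \<le> energy e mm k \<xi> B1 B2 t"
  proof -
    fix t :: real assume t: "t \<ge> 0"
    have "Ef 0 * exp (c * G 0 - c * G t) = (Ef 0 * exp (c * G 0)) / exp (c * G t)" by (simp add: exp_diff)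
    also have "\<dots> \<le> (Ef t * exp (c * G t)) / exp (c * G t)" using F1[OF t] by (rule divide_right_mono) simp
    also have "\<dots> = Ef t" by simp
    finally have f: "Ef 0 * exp (c * G 0 - c * G t) \<le> Ef t" .
    have "c * (- pi) \<le> c * (G 0 - G t)" using Gb[of t] by (intro mult_left_mono c0) linarith
    then have "- c * pi \<le> c * G 0 - c * G t" by (simp add: algebra_simps)
    then have "exp (- c * pi) \<le> exp (c * G 0 - c * G t)" by simp
    then have "exp (- c * pi) * Ef 0 \<le> exp (c * G 0 - c * G t) * Ef 0" using Ef0[of 0] by (rule mult_right_mono)
    with f show "exp (- c * pi) * energy e mm k \<xi> B1 B2 0 \<le> energy e mm k \<xi> B1 B2 t"
      unfolding EE by (simp add: mult.commute)
  qed
  show "\<And>t. t \<ge> 0 \<Longrightarrow> energy e mm k \<xi> B1 B2 t \<le> exp (c * pi) * energy e mm k \<xi> B1 B2 0"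
  proof -
    fix t :: real assume t: "t \<ge> 0"
    have f2: "Ef t * exp (- c * G t) \<le> Ef 0 * exp (- c * G 0)" using F2[OF t] by simp
    have "Ef t = (Ef t * exp (- c * G t)) / exp (- c * G t)" by simp
    also have "\<dots> \<le> (Ef 0 * exp (- c * G 0)) / exp (- c * G t)" using f2 by (rule divide_right_mono) simp
    also have "\<dots> = Ef 0 * exp (c * G t - c * G 0)" by (simp add: exp_diff exp_minus field_simps)
    finally have f: "Ef t \<le> Ef 0 * exp (c * G t - c * G 0)" .
    have "c * (G t - G 0) \<le> c * pi" using Gb[of t] by (intro mult_left_mono c0) linarith
    then have "c * G t - c * G 0 \<le> c * pi" by (simp add: algebra_simps)
    then have "exp (c * G t - c * G 0) \<le> exp (c * pi)" by simp
    then have "Ef 0 * exp (c * G t - c * G 0) \<le> Ef 0 * exp (c * pi)" using Ef0[of 0] by (rule mult_left_mono)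
    with f show "energy e mm k \<xi> B1 B2 t \<le> exp (c * pi) * energy e mm k \<xi> B1 B2 0"
      unfolding EE by (simp add: mult.commute)
  qed
  show "\<And>t. S t / 2 \<le> energy e mm k \<xi> B1 B2 t" using pb EE by auto
  show "\<And>t. energy e mm k \<xi> B1 B2 t \<le> 3 * S t / 2" using pb EE by auto
qed


lemma S_bounds:
  fixes a Am x y :: real
  assumes "1 \<le> a" "a \<le> Am" "x \<ge> 0" "y \<ge> 0"
  shows "(x + y) / Am \<le> a * x + y / a" "a * x + y / a \<le> Am * (x + y)"
proof -
  have "x / Am \<le> x / 1" by (rule divide_left_mono) (use assms in auto)
  also have "\<dots> \<le> a * x" using mult_right_mono[OF assms(1) assms(3)] by simp
  finally have "x / Am \<le> a * x" .
  moreover have "y / Am \<le> y / a" using assms by (intro divide_left_mono) auto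
  ultimately show "(x + y) / Am \<le> a * x + y / a" by (simp add: add_divide_distrib)
  have "a * x \<le> Am * x" using assms by (intro mult_right_mono) auto
  moreover have "y / a \<le> Am * y"
  proof -
    have "y / a \<le> y / 1" by (rule divide_left_mono) (use assms in auto)
    also have "\<dots> \<le> Am * y" using mult_right_mono[OF order_trans[OF assms(1,2)] assms(4)] by simp
    finally show ?thesis .
  qed
  ultimately show "a * x + y / a \<le> Am * (x + y)" by (simp add: algebra_simps)
qed

theorem lemma4p1:
  fixes e mm :: real
  assumes "e > 0" and "mm > 0"
  shows "\<exists>C1 C1' C2 C2'. 0 < C1 \<and> C1 \<le> C1' \<and> 0 < C2 \<and> C2 \<le> C2' \<and>
    (\<forall>k::int. \<forall>\<xi>::real. \<forall>B1 B2. k \<noteq> 0 \<longrightarrow> is_sol e mm k \<xi> B1 B2 \<longrightarrow>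
      (\<forall>t\<ge>0.
         C1 * energy e mm k \<xi> B1 B2 0 \<le> energy e mm k \<xi> B1 B2 t \<and>
         energy e mm k \<xi> B1 B2 t \<le> C1' * energy e mm k \<xi> B1 B2 0 \<and>
         C2 * Bnorm B1 B2 0 \<le> Bnorm B1 B2 t \<and>
         Bnorm B1 B2 t \<le> C2' * Bnorm B1 B2 0))"
proof -
  define c where "c = 2 * Kc e mm"
  define C1 where "C1 = exp (- c * pi)"
  define C1' where "C1' = exp (c * pi)"
  define Am where "Am = sqrt (1 + 4*pi*e\<^sup>2 + 2*mm)"
  define C2 where "C2 = sqrt (C1 / 3) / Am"
  define C2' where "C2' = Am * sqrt (3 * C1')"
  have Kc0: "Kc e mm \<ge> 0" unfolding Kc_def using assms by (simp add: add_nonneg_nonneg)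
  have c0: "c \<ge> 0" unfolding c_def using Kc0 by simp
  have C1p: "0 < C1" unfolding C1_def by simp
  have C11: "C1 \<le> 1" unfolding C1_def using c0 by simp
  have C1'1: "1 \<le> C1'" unfolding C1'_def using c0 by simp
  have Am1: "Am \<ge> 1" unfolding Am_def using assms by simp
  have C2p: "0 < C2" unfolding C2_def using C1p Am1 by simp
  have "sqrt (C1 / 3) \<le> 1" using C11 C1p by simp
  moreover have "1 \<le> sqrt (3 * C1')" using C1'1 by simp
  moreover have "sqrt (C1 / 3) / Am \<le> sqrt (C1 / 3) / 1" by (rule divide_left_mono) (use Am1 C1p in auto)
  moreover have "1 * 1 \<le> Am * sqrt (3 * C1')" by (rule mult_mono) (use Am1 \<open>1 \<le> sqrt (3 * C1')\<close> in auto)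
  ultimately have "sqrt (C1 / 3) / Am \<le> Am * sqrt (3 * C1')" by linarith
  then have C22: "C2 \<le> C2'" unfolding C2_def C2'_def .
  have main: "C1 * energy e mm k \<xi> B1 B2 0 \<le> energy e mm k \<xi> B1 B2 t \<and>
         energy e mm k \<xi> B1 B2 t \<le> C1' * energy e mm k \<xi> B1 B2 0 \<and>
         C2 * Bnorm B1 B2 0 \<le> Bnorm B1 B2 t \<and>
         Bnorm B1 B2 t \<le> C2' * Bnorm B1 B2 0"
    if k: "k \<noteq> 0" and sol: "is_sol e mm k \<xi> B1 B2" and t: "t \<ge> 0" for k \<xi> B1 B2 t
  proof -
    note ev = energy_evol[OF k assms sol, folded c_def C1_def C1'_def Am_def]
    define E where "E = energy e mm k \<xi> B1 B2"
    define X where "X = (\<lambda>t. (cmod (B1 t))\<^sup>2 + (cmod (B2 t))\<^sup>2)"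
    define S where "S = (\<lambda>t. sqrt (Rf e mm k \<xi> t) * (cmod (B1 t))\<^sup>2 + (cmod (B2 t))\<^sup>2 / sqrt (Rf e mm k \<xi> t))"
    have e1: "C1 * E 0 \<le> E t" using ev(1)[OF t] unfolding E_def C1_def by simp
    have e2: "E t \<le> C1' * E 0" using ev(2)[OF t] unfolding E_def C1'_def by simp
    have SE: "\<And>t. S t / 2 \<le> E t" "\<And>t. E t \<le> 3 * S t / 2" using ev(3,4) unfolding S_def E_def by auto
    have SX: "\<And>t. X t / Am \<le> S t \<and> S t \<le> Am * X t"
      unfolding S_def X_def using S_bounds[OF ev(5) ev(6)] by simp
    have X0: "\<And>t. X t \<ge> 0" unfolding X_def by simp
    have BX: "\<And>t. Bnorm B1 B2 t = sqrt (X t)" unfolding Bnorm_def X_def ..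
    have up: "X t \<le> (3 * Am * Am * C1') * X 0"
    proof -
      have "X t \<le> Am * S t" using SX[of t] Am1 by (simp add: divide_le_eq mult.commute)
      also have "\<dots> \<le> Am * (2 * E t)" using SE(1)[of t] Am1 by (intro mult_left_mono) auto
      also have "\<dots> \<le> Am * (2 * (C1' * E 0))" using e2 Am1 by (intro mult_left_mono) auto
      also have "\<dots> \<le> Am * (2 * (C1' * (3 * S 0 / 2)))" using SE(2)[of 0] Am1 C1'1 by (intro mult_left_mono) auto
      also have "\<dots> = 3 * Am * C1' * S 0" by simp
      also have "\<dots> \<le> 3 * Am * C1' * (Am * X 0)" using SX[of 0] Am1 C1'1 by (intro mult_left_mono) auto
      finally show ?thesis by (simp add: algebra_simps)
    qed
    have lo: "(C1 / (3 * Am * Am)) * X 0 \<le> X t"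
    proof -
      have "(C1 / (3 * Am * Am)) * X 0 = C1 / (3 * Am) * (X 0 / Am)" by simp
      also have "\<dots> \<le> C1 / (3 * Am) * S 0" using SX[of 0] C1p Am1 by (intro mult_left_mono) auto
      also have "\<dots> \<le> C1 / (3 * Am) * (2 * E 0)" using SE(1)[of 0] C1p Am1 by (intro mult_left_mono) auto
      also have "\<dots> = (2 / (3 * Am)) * (C1 * E 0)" by simp
      also have "\<dots> \<le> (2 / (3 * Am)) * E t" using e1 Am1 by (intro mult_left_mono) auto
      also have "\<dots> \<le> (2 / (3 * Am)) * (3 * S t / 2)" using SE(2)[of t] Am1 by (intro mult_left_mono) auto
      also have "\<dots> = S t / Am" using Am1 by simp
      also have "\<dots> \<le> (Am * X t) / Am" using SX[of t] Am1 by (intro divide_right_mono) auto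
      also have "\<dots> = X t" using Am1 by simp
      finally show ?thesis .
    qed
    have b1: "C2 * Bnorm B1 B2 0 \<le> Bnorm B1 B2 t"
    proof -
      have "C2 * Bnorm B1 B2 0 = sqrt ((C1 / (3 * Am * Am)) * X 0)" unfolding BX C2_def using Am1
        by (simp add: real_sqrt_mult real_sqrt_divide)
      also have "\<dots> \<le> sqrt (X t)" using lo by simp
      finally show ?thesis unfolding BX .
    qed
    have b2: "Bnorm B1 B2 t \<le> C2' * Bnorm B1 B2 0"
    proof -
      have "sqrt (X t) \<le> sqrt ((3 * Am * Am * C1') * X 0)" using up by simp
      also have "\<dots> = C2' * sqrt (X 0)" unfolding C2'_def using Am1
        by (simp add: real_sqrt_mult)
      finally show ?thesis unfolding BX .
    qed
    show ?thesis using e1 e2 b1 b2 unfolding E_def by auto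
  qed
  show ?thesis
    by (rule exI[of _ C1], rule exI[of _ C1'], rule exI[of _ C2], rule exI[of _ C2'])
      (use C1p C1'1 C11 C2p C22 main in auto)
qed

end
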